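(* Let $m\ge1$ be an integer, $r=2m+1$, $\varepsilon>0$ real, $p$ a positive integer, and $\mathcal C_0^r,\dots,\mathcal C_{r-1}^r>0$. Let $f_j=f(x_j)$ be values of a function on a uniform grid $x_j=x_0+j\Delta x$, fix an index $i$, and let $\hat f_{i+1/2}=\sum_{k=0}^{r-1}\omega_k\,g(f_{i+k-r+1},\dots,f_{i+k})$ be the WENO reconstruction defined in the context. Then $$\hat f_{i+1/2}=\frac{\mathbf p_1(\mathbf f)}{\mathbf p_2(\mathbf f)},\qquad \mathbf f=(f_{i-r+1},\dots,f_{i+r-1}),$$ where $\mathbf p_1,\mathbf p_2$ are multivariate polynomials in $\mathbf f$ of degree at most $2pr-1$ and $2p(r-1)$ respectively, with $\mathbf p_2(\mathbf f)>0$ for all real $\mathbf f$.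
   Context: For $k=0,\dots,r-1$, the candidate stencil $S^k$ consists of the grid points $x_{i+k-r+1},\dots,x_{i+k}$; $\mathbf p_k$ is the polynomial of degree at most $r-1$ interpolating $f$ there. The linear map $g$ is $g(f_{i+k-r+1},\dots,f_{i+k})=\sum_{l=0}^{r-1}c^r_{k,l}f_{i+k-r+1+l}=\mathbf p_k(x_{i+1/2})$, with constants $c^r_{k,l}$ depending only on $r,k,l$, where $x_{i\pm1/2}=x_i\pm\Delta x/2$. The smoothness indicator is $\mathbf{IS}_k=\sum_{l=1}^{r-1}(\Delta x)^{2l-1}\int_{x_{i-1/2}}^{x_{i+1/2}}\big(\mathbf p_k^{(l)}(x)\big)^2dx$, and the WENO weights are $\omega_k=\alpha_k/(\alpha_0+\dots+\alpha_{r-1})$, $\alpha_k=\mathcal C_k^r/(\varepsilon+\mathbf{IS}_k)^p$. *)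

theory Defs
  imports "HOL-Analysis.Analysis" "HOL-Computational_Algebra.Polynomial"
begin

definition mpoly_fun :: "nat \<Rightarrow> nat \<Rightarrow> ((nat \<Rightarrow> real) \<Rightarrow> real) \<Rightarrow> bool" where
  "mpoly_fun n d P \<longleftrightarrow>
     (\<exists>(A :: (nat \<Rightarrow> nat) set) (c :: (nat \<Rightarrow> nat) \<Rightarrow> real).
        finite A \<and>
        (\<forall>a\<in>A. (\<forall>j\<ge>n. a j = 0) \<and> (\<Sum>j<n. a j) \<le> d) \<and>
        (\<forall>v. P v = (\<Sum>a\<in>A. c a * (\<Prod>j<n. v j ^ a j))))"

definition grid :: "real \<Rightarrow> real \<Rightarrow> int \<Rightarrow> real" where
  "grid x0 dx j = x0 + of_int j * dx"

definition weno_pk :: "nat \<Rightarrow> real \<Rightarrow> real \<Rightarrow> (real \<Rightarrow> real) \<Rightarrow> int \<Rightarrow> nat \<Rightarrow> real poly" where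
  "weno_pk r x0 dx f i k =
     (THE q. degree q \<le> r - 1 \<and>
        (\<forall>l<r. poly q (grid x0 dx (i + int k - int r + 1 + int l))
               = f (grid x0 dx (i + int k - int r + 1 + int l))))"

definition weno_g :: "nat \<Rightarrow> real \<Rightarrow> real \<Rightarrow> (real \<Rightarrow> real) \<Rightarrow> int \<Rightarrow> nat \<Rightarrow> real" where
  "weno_g r x0 dx f i k = poly (weno_pk r x0 dx f i k) (grid x0 dx i + dx / 2)"

definition weno_IS :: "nat \<Rightarrow> real \<Rightarrow> real \<Rightarrow> (real \<Rightarrow> real) \<Rightarrow> int \<Rightarrow> nat \<Rightarrow> real" where
  "weno_IS r x0 dx f i k =
     (\<Sum>l\<in>{1..r - 1}. dx ^ (2 * l - 1) *
        integral {grid x0 dx i - dx / 2 .. grid x0 dx i + dx / 2}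
          (\<lambda>t. (poly ((pderiv ^^ l) (weno_pk r x0 dx f i k)) t) ^ 2))"

definition weno_alpha :: "nat \<Rightarrow> real \<Rightarrow> nat \<Rightarrow> (nat \<Rightarrow> real) \<Rightarrow> real \<Rightarrow> real \<Rightarrow> (real \<Rightarrow> real) \<Rightarrow> int \<Rightarrow> nat \<Rightarrow> real" where
  "weno_alpha r eps p C x0 dx f i k = C k / (eps + weno_IS r x0 dx f i k) ^ p"

definition weno_omega :: "nat \<Rightarrow> real \<Rightarrow> nat \<Rightarrow> (nat \<Rightarrow> real) \<Rightarrow> real \<Rightarrow> real \<Rightarrow> (real \<Rightarrow> real) \<Rightarrow> int \<Rightarrow> nat \<Rightarrow> real" where
  "weno_omega r eps p C x0 dx f i k =
     weno_alpha r eps p C x0 dx f i k / (\<Sum>j<r. weno_alpha r eps p C x0 dx f i j)"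

definition weno_rec :: "nat \<Rightarrow> real \<Rightarrow> nat \<Rightarrow> (nat \<Rightarrow> real) \<Rightarrow> real \<Rightarrow> real \<Rightarrow> (real \<Rightarrow> real) \<Rightarrow> int \<Rightarrow> real" where
  "weno_rec r eps p C x0 dx f i =
     (\<Sum>k<r. weno_omega r eps p C x0 dx f i k * weno_g r x0 dx f i k)"

end

theory Submission
  imports Defs
begin


lemma mpoly_funI_gen:
  fixes X :: "'x set" and e :: "'x \<Rightarrow> nat \<Rightarrow> nat" and c :: "'x \<Rightarrow> real"
  assumes fin: "finite X"
    and deg: "\<And>x. x \<in> X \<Longrightarrow> (\<forall>j\<ge>n. e x j = 0) \<and> (\<Sum>j<n. e x j) \<le> d"
    and eq: "\<And>v. P v = (\<Sum>x\<in>X. c x * (\<Prod>j<n. v j ^ e x j))"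
  shows "mpoly_fun n d P"
  unfolding mpoly_fun_def
proof (intro exI conjI allI)
  show "finite (e ` X)" using fin by simp
  show "\<forall>a\<in>e ` X. (\<forall>j\<ge>n. a j = 0) \<and> (\<Sum>j<n. a j) \<le> d" using deg by auto
  fix v
  have "P v = (\<Sum>x\<in>X. c x * (\<Prod>j<n. v j ^ e x j))" by (rule eq)
  also have "\<dots> = (\<Sum>a\<in>e ` X. \<Sum>x\<in>{x\<in>X. e x = a}. c x * (\<Prod>j<n. v j ^ e x j))"
    using fin by (rule sum.image_gen)
  also have "\<dots> = (\<Sum>a\<in>e ` X. \<Sum>x\<in>{x\<in>X. e x = a}. c x * (\<Prod>j<n. v j ^ a j))"
    by (intro sum.cong refl) auto
  also have "\<dots> = (\<Sum>a\<in>e ` X. (\<Sum>x\<in>{x\<in>X. e x = a}. c x) * (\<Prod>j<n. v j ^ a j))"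
    by (simp add: sum_distrib_right)
  finally show "P v = (\<Sum>a\<in>e ` X. (\<Sum>x\<in>{x\<in>X. e x = a}. c x) * (\<Prod>j<n. v j ^ a j))" .
qed

lemma mpoly_fun_mono: "mpoly_fun n d P \<Longrightarrow> d \<le> d' \<Longrightarrow> mpoly_fun n d' P"
  unfolding mpoly_fun_def by (meson order_trans)

lemma mpoly_fun_const: "mpoly_fun n d (\<lambda>v. k)"
  by (rule mpoly_funI_gen[where X="{()}" and e="\<lambda>_ _. 0" and c="\<lambda>_. k"]) auto

lemma mpoly_fun_var: "j < n \<Longrightarrow> 1 \<le> d \<Longrightarrow> mpoly_fun n d (\<lambda>v. v j)"
proof (rule mpoly_funI_gen[where X="{()}" and e="\<lambda>_ i. if i = j then 1 else 0" and c="\<lambda>_. 1"])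
  fix v :: "nat \<Rightarrow> real" assume "j < n"
  have "(\<Prod>i<n. v i ^ (if i = j then 1 else 0)) = (\<Prod>i<n. if i = j then v i else 1)"
    by (intro prod.cong) auto
  also have "\<dots> = v j" using \<open>j < n\<close> by (simp add: prod.delta)
  finally show "v j = (\<Sum>x\<in>{()}. 1 * (\<Prod>i<n. v i ^ (if i = j then 1 else 0)))" by simp
qed (auto simp: sum.delta)

lemma mpoly_fun_add:
  assumes "mpoly_fun n d P" "mpoly_fun n d Q"
  shows "mpoly_fun n d (\<lambda>v. P v + Q v)"
proof -
  obtain A c where A: "finite A" "\<forall>a\<in>A. (\<forall>j\<ge>n. a j = 0) \<and> (\<Sum>j<n. a j) \<le> d"
      "\<forall>v. P v = (\<Sum>a\<in>A. c a * (\<Prod>j<n. v j ^ a j))"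
    using assms(1) unfolding mpoly_fun_def by blast
  obtain B c' where B: "finite B" "\<forall>a\<in>B. (\<forall>j\<ge>n. a j = 0) \<and> (\<Sum>j<n. a j) \<le> d"
      "\<forall>v. Q v = (\<Sum>a\<in>B. c' a * (\<Prod>j<n. v j ^ a j))"
    using assms(2) unfolding mpoly_fun_def by blast
  show ?thesis
  proof (rule mpoly_funI_gen[where X="A <+> B" and e="case_sum id id" and c="case_sum c c'"])
    show "finite (A <+> B)" using A B by simp
  next
    fix x assume "x \<in> A <+> B" then show "(\<forall>j\<ge>n. case_sum id id x j = 0) \<and> (\<Sum>j<n. case_sum id id x j) \<le> d"
      using A B by auto
  next
    fix v show "P v + Q v = (\<Sum>x\<in>A <+> B. case_sum c c' x * (\<Prod>j<n. v j ^ case_sum id id x j))"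
      using A B by (simp add: sum.Plus comp_def)
  qed
qed

lemma mpoly_fun_mult:
  assumes "mpoly_fun n d1 P" "mpoly_fun n d2 Q"
  shows "mpoly_fun n (d1 + d2) (\<lambda>v. P v * Q v)"
proof -
  obtain A c where A: "finite A" "\<forall>a\<in>A. (\<forall>j\<ge>n. a j = 0) \<and> (\<Sum>j<n. a j) \<le> d1"
      "\<forall>v. P v = (\<Sum>a\<in>A. c a * (\<Prod>j<n. v j ^ a j))"
    using assms(1) unfolding mpoly_fun_def by blast
  obtain B c' where B: "finite B" "\<forall>a\<in>B. (\<forall>j\<ge>n. a j = 0) \<and> (\<Sum>j<n. a j) \<le> d2"
      "\<forall>v. Q v = (\<Sum>a\<in>B. c' a * (\<Prod>j<n. v j ^ a j))"
    using assms(2) unfolding mpoly_fun_def by blast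
  show ?thesis
  proof (rule mpoly_funI_gen[where X="A \<times> B" and e="\<lambda>(a,b) j. a j + b j" and c="\<lambda>(a,b). c a * c' b"])
    show "finite (A \<times> B)" using A B by simp
  next
    fix x assume "x \<in> A \<times> B"
    then obtain a b where x: "x = (a,b)" "a \<in> A" "b \<in> B" by auto
    then show "(\<forall>j\<ge>n. (case x of (a, b) \<Rightarrow> \<lambda>j. a j + b j) j = 0) \<and> (\<Sum>j<n. (case x of (a, b) \<Rightarrow> \<lambda>j. a j + b j) j) \<le> d1 + d2"
      using A(2) B(2) by (auto simp: sum.distrib add_mono)
  next
    fix v
    have "P v * Q v = (\<Sum>a\<in>A. \<Sum>b\<in>B. (c a * (\<Prod>j<n. v j ^ a j)) * (c' b * (\<Prod>j<n. v j ^ b j)))"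
      using A(3) B(3) by (simp add: sum_product)
    also have "\<dots> = (\<Sum>a\<in>A. \<Sum>b\<in>B. (c a * c' b) * (\<Prod>j<n. v j ^ (a j + b j)))"
      by (intro sum.cong refl) (simp add: power_add prod.distrib mult_ac)
    also have "\<dots> = (\<Sum>x\<in>A \<times> B. (case x of (a,b) \<Rightarrow> c a * c' b) * (\<Prod>j<n. v j ^ (case x of (a,b) \<Rightarrow> \<lambda>j. a j + b j) j))"
      by (simp add: sum.cartesian_product split_def)
    finally show "P v * Q v = (\<Sum>x\<in>A \<times> B. (case x of (a,b) \<Rightarrow> c a * c' b) * (\<Prod>j<n. v j ^ (case x of (a,b) \<Rightarrow> \<lambda>j. a j + b j) j))" .
  qed
qed

lemma mpoly_fun_sum:
  assumes "finite K" "\<And>k. k \<in> K \<Longrightarrow> mpoly_fun n d (F k)"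
  shows "mpoly_fun n d (\<lambda>v. \<Sum>k\<in>K. F k v)"
  using assms by (induction K rule: finite_induct) (auto intro: mpoly_fun_add mpoly_fun_const)

lemma mpoly_fun_prod:
  assumes "finite K" "\<And>k. k \<in> K \<Longrightarrow> mpoly_fun n (d k) (F k)"
  shows "mpoly_fun n (\<Sum>k\<in>K. d k) (\<lambda>v. \<Prod>k\<in>K. F k v)"
  using assms by (induction K rule: finite_induct) (auto intro: mpoly_fun_mult mpoly_fun_const)

lemma mpoly_fun_power:
  assumes "mpoly_fun n d P"
  shows "mpoly_fun n (q * d) (\<lambda>v. P v ^ q)"
  by (induction q) (auto intro: mpoly_fun_mult mpoly_fun_const assms)

lemma mpoly_fun_cmult:
  assumes "mpoly_fun n d P"
  shows "mpoly_fun n d (\<lambda>v. k * P v)"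
  using mpoly_fun_mult[OF mpoly_fun_const[of n 0 k] assms] by simp



definition lag :: "(nat \<Rightarrow> real) \<Rightarrow> nat \<Rightarrow> nat \<Rightarrow> real poly" where
  "lag x r l = (\<Prod>m\<in>{..<r} - {l}. smult (1 / (x l - x m)) [:- x m, 1:])"

lemma degree_lag: "l < r \<Longrightarrow> degree (lag x r l) \<le> r - 1"
proof -
  assume "l < r"
  have "degree (lag x r l) \<le> (\<Sum>m\<in>{..<r} - {l}. degree (smult (1 / (x l - x m)) [:- x m, 1:]))"
    unfolding lag_def by (rule order_trans[OF degree_prod_sum_le]) (auto simp: comp_def)
  also have "\<dots> \<le> (\<Sum>m\<in>{..<r} - {l}. 1)"
    by (intro sum_mono) (simp add: degree_smult_le)
  also have "\<dots> \<le> r - 1"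
    using \<open>l < r\<close> by (auto simp: card_Diff_singleton)
  finally show ?thesis .
qed

lemma poly_lag:
  assumes inj: "inj_on x {..<r}" and "j < r" "l < r"
  shows "poly (lag x r l) (x j) = (if j = l then 1 else 0)"
proof (cases "j = l")
  case True
  have "poly (lag x r l) (x j) = (\<Prod>m\<in>{..<r} - {l}. (x j - x m) / (x l - x m))"
    unfolding lag_def poly_prod by (intro prod.cong) (auto simp: diff_divide_distrib)
  also have "\<dots> = (\<Prod>m\<in>{..<r} - {l}. 1)"
    using True inj assms by (intro prod.cong refl) (auto simp: inj_on_def)
  finally show ?thesis using True by simp
next
  case False
  have "poly (lag x r l) (x j) = (\<Prod>m\<in>{..<r} - {l}. (x j - x m) / (x l - x m))"
    unfolding lag_def poly_prod by (intro prod.cong) (auto simp: diff_divide_distrib)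
  also have "\<dots> = 0"
    using False assms by (intro prod_zero) (auto intro!: bexI[of _ j])
  finally show ?thesis using False by simp
qed

definition interp :: "(nat \<Rightarrow> real) \<Rightarrow> nat \<Rightarrow> (nat \<Rightarrow> real) \<Rightarrow> real poly" where
  "interp x r w = (\<Sum>l<r. smult (w l) (lag x r l))"

lemma degree_interp: "degree (interp x r w) \<le> r - 1"
  unfolding interp_def
  by (rule degree_sum_le) (use degree_lag[of _ r x] in \<open>auto intro: order_trans[OF degree_smult_le]\<close>)

lemma poly_interp:
  assumes inj: "inj_on x {..<r}" and "j < r"
  shows "poly (interp x r w) (x j) = w j"
proof -
  have "poly (interp x r w) (x j) = (\<Sum>l<r. w l * (if j = l then 1 else 0))"
    unfolding interp_def poly_sum using assms by (intro sum.cong) (auto simp: poly_lag)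
  also have "\<dots> = w j" using assms by (simp add: if_distrib sum.delta cong: if_cong)
  finally show ?thesis .
qed

lemma interp_unique:
  assumes inj: "inj_on x {..<r}" and "r > 0"
    and "degree q \<le> r - 1" and "\<forall>l<r. poly q (x l) = w l"
  shows "q = interp x r w"
proof (rule poly_eqI_degree[where A="x ` {..<r}"])
  fix y assume "y \<in> x ` {..<r}"
  then obtain l where "l < r" "y = x l" by auto
  then show "poly q y = poly (interp x r w) y" using assms poly_interp by auto
next
  have "card (x ` {..<r}) = r" using inj by (simp add: card_image)
  then show "degree q < card (x ` {..<r})" "degree (interp x r w) < card (x ` {..<r})"
    using assms degree_interp[of x r w] by auto
qed



lemma grid_inj: "dx > 0 \<Longrightarrow> grid x0 dx a = grid x0 dx b \<longleftrightarrow> a = b"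
  unfolding grid_def by auto

lemma pk_eq:
  assumes "dx > 0" "r > 0"
  shows "weno_pk r x0 dx f i k = interp (\<lambda>l. grid x0 dx (i + int k - int r + 1 + int l)) r
            (\<lambda>l. f (grid x0 dx (i - int r + 1 + int (k + l))))"
proof -
  let ?x = "\<lambda>l. grid x0 dx (i + int k - int r + 1 + int l)"
  let ?w = "\<lambda>l. f (grid x0 dx (i - int r + 1 + int (k + l)))"
  have inj: "inj_on ?x {..<r}" using assms by (auto simp: inj_on_def grid_inj)
  have w: "?w l = f (?x l)" for l by (simp add: algebra_simps)
  show ?thesis unfolding weno_pk_def
  proof (rule the_equality)
    show "degree (interp ?x r ?w) \<le> r - 1 \<and> (\<forall>l<r. poly (interp ?x r ?w) (?x l) = f (?x l))"
      using degree_interp poly_interp[OF inj] w by auto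
  next
    fix q assume "degree q \<le> r - 1 \<and> (\<forall>l<r. poly q (?x l) = f (?x l))"
    then show "q = interp ?x r ?w" using interp_unique[OF inj \<open>r > 0\<close>, of q ?w] w by auto
  qed
qed

lemma poly_higher_interp:
  "poly ((pderiv ^^ s) (interp x r w)) t = (\<Sum>a<r. w a * poly ((pderiv ^^ s) (lag x r a)) t)"
  unfolding interp_def higher_pderiv_sum higher_pderiv_smult poly_sum by simp

lemma integral_sq_interp:
  fixes lo hi :: real
  shows "integral {lo..hi} (\<lambda>t. (poly ((pderiv ^^ s) (interp x r w)) t)^2)
    = (\<Sum>a<r. \<Sum>b<r. w a * w b * integral {lo..hi}
         (\<lambda>t. poly ((pderiv ^^ s) (lag x r a)) t * poly ((pderiv ^^ s) (lag x r b)) t))"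
proof -
  let ?P = "\<lambda>a t. poly ((pderiv ^^ s) (lag x r a)) t"
  have int: "(\<lambda>t. c * (?P a t * ?P b t)) integrable_on {lo..hi}" for a b c
    by (intro integrable_continuous_interval continuous_intros)
  have "(\<lambda>t. (poly ((pderiv ^^ s) (interp x r w)) t)^2)
      = (\<lambda>t. \<Sum>a<r. \<Sum>b<r. (w a * w b) * (?P a t * ?P b t))"
    by (rule ext) (simp add: poly_higher_interp power2_eq_square sum_product mult_ac)
  then have "integral {lo..hi} (\<lambda>t. (poly ((pderiv ^^ s) (interp x r w)) t)^2)
      = integral {lo..hi} (\<lambda>t. \<Sum>a<r. \<Sum>b<r. (w a * w b) * (?P a t * ?P b t))" by simp
  also have "\<dots> = (\<Sum>a<r. integral {lo..hi} (\<lambda>t. \<Sum>b<r. (w a * w b) * (?P a t * ?P b t)))"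
    by (rule integral_sum) (auto intro!: integrable_sum int)
  also have "\<dots> = (\<Sum>a<r. \<Sum>b<r. integral {lo..hi} (\<lambda>t. (w a * w b) * (?P a t * ?P b t)))"
    by (intro sum.cong refl integral_sum) (auto intro!: int)
  also have "\<dots> = (\<Sum>a<r. \<Sum>b<r. w a * w b * integral {lo..hi} (\<lambda>t. ?P a t * ?P b t))"
    by (intro sum.cong refl) simp
  finally show ?thesis .
qed

lemma integral_sq_nonneg:
  fixes lo hi :: real and q :: "real poly"
  shows "0 \<le> integral {lo..hi} (\<lambda>t. (poly q t)^2)"
  by (intro integral_nonneg integrable_continuous_interval continuous_intros) auto



theorem corollary5:
  fixes m r p :: nat and eps x0 dx :: real and C :: "nat \<Rightarrow> real" and i :: int
  assumes "m \<ge> 1" and "r = 2 * m + 1" and "eps > 0" and "p > 0"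
    and "\<forall>k<r. C k > 0" and "dx > 0"
  shows "\<exists>P1 P2. mpoly_fun (2 * r - 1) (2 * p * r - 1) P1
           \<and> mpoly_fun (2 * r - 1) (2 * p * (r - 1)) P2
           \<and> (\<forall>v. P2 v > 0)
           \<and> (\<forall>f :: real \<Rightarrow> real.
                 weno_rec r eps p C x0 dx f i
                 = P1 (\<lambda>j. f (grid x0 dx (i - int r + 1 + int j)))
                   / P2 (\<lambda>j. f (grid x0 dx (i - int r + 1 + int j))))"
proof -
  have r0: "r > 0" using assms by simp
  define n where "n = 2 * r - 1"
  define X where "X k = (\<lambda>l. grid x0 dx (i + int k - int r + 1 + int l))" for k
  define Q where "Q k v = interp (X k) r (\<lambda>l. v (k + l))" for k and v :: "nat \<Rightarrow> real"
  define vf where "vf f = (\<lambda>j. f (grid x0 dx (i - int r + 1 + int j)))" for f :: "real \<Rightarrow> real"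
  define xh where "xh = grid x0 dx i + dx / 2"
  define lo where "lo = grid x0 dx i - dx / 2"
  define G where "G k v = poly (Q k v) xh" for k v
  define IS where "IS k v = (\<Sum>s\<in>{1..r - 1}. dx ^ (2 * s - 1) *
        integral {lo .. xh} (\<lambda>t. (poly ((pderiv ^^ s) (Q k v)) t) ^ 2))" for k v
  define E where "E k v = eps + IS k v" for k v
  define P1 where "P1 v = (\<Sum>k<r. C k * G k v * (\<Prod>j\<in>{..<r} - {k}. E j v ^ p))" for v
  define P2 where "P2 v = (\<Sum>k<r. C k * (\<Prod>j\<in>{..<r} - {k}. E j v ^ p))" for v

  have pk: "weno_pk r x0 dx f i k = Q k (vf f)" for f k
    unfolding Q_def X_def vf_def using pk_eq[OF \<open>dx > 0\<close> r0] by simp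
  have g_eq: "weno_g r x0 dx f i k = G k (vf f)" for f k
    unfolding weno_g_def G_def pk xh_def ..
  have IS_eq: "weno_IS r x0 dx f i k = IS k (vf f)" for f k
    unfolding weno_IS_def IS_def pk xh_def lo_def ..
  have IS_nn: "IS k v \<ge> 0" for k v
    unfolding IS_def using \<open>dx > 0\<close>
    by (intro sum_nonneg mult_nonneg_nonneg integral_sq_nonneg) auto
  have E_pos: "E k v > 0" for k v unfolding E_def using IS_nn[of k v] \<open>eps > 0\<close> by linarith

  have var: "mpoly_fun n 1 (\<lambda>v. v (k + l))" if "k < r" "l < r" for k l
    using that by (intro mpoly_fun_var) (auto simp: n_def)
  have var2: "mpoly_fun n 2 (\<lambda>v. v (k + a) * v (k + b))" if "k < r" "a < r" "b < r" for k a b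
    using mpoly_fun_mult[OF var[OF that(1,2)] var[OF that(1,3)]] by (simp add: numeral_2_eq_2)
  have G_mp: "mpoly_fun n 1 (G k)" if "k < r" for k
  proof -
    have "G k = (\<lambda>v. \<Sum>l<r. poly (lag (X k) r l) xh * v (k + l))"
      unfolding G_def Q_def interp_def poly_sum by (auto simp: mult_ac)
    then show ?thesis using that
      by (simp only:) (intro mpoly_fun_sum mpoly_fun_cmult var, auto)
  qed
  have IS_mp: "mpoly_fun n 2 (IS k)" if "k < r" for k
  proof -
    have "IS k = (\<lambda>v. \<Sum>s\<in>{1..r - 1}. dx ^ (2 * s - 1) * (\<Sum>a<r. \<Sum>b<r.
       integral {lo..xh} (\<lambda>t. poly ((pderiv ^^ s) (lag (X k) r a)) t * poly ((pderiv ^^ s) (lag (X k) r b)) t)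
       * (v (k + a) * v (k + b))))"
      unfolding IS_def Q_def integral_sq_interp by (auto simp: mult_ac)
    then show ?thesis using that
      by (simp only:) (intro mpoly_fun_sum mpoly_fun_cmult var2, auto)
  qed
  have E_mp: "mpoly_fun n (2 * p) (\<lambda>v. E j v ^ p)" if "j < r" for j
  proof -
    have "mpoly_fun n 2 (E j)"
      unfolding E_def using mpoly_fun_add[OF mpoly_fun_const IS_mp[OF that]] .
    from mpoly_fun_power[OF this, of p] show ?thesis by (simp add: mult.commute)
  qed
  have prod_mp: "mpoly_fun n (2 * p * (r - 1)) (\<lambda>v. \<Prod>j\<in>{..<r} - {k}. E j v ^ p)" if "k < r" for k
  proof -
    have "mpoly_fun n (\<Sum>j\<in>{..<r} - {k}. 2 * p) (\<lambda>v. \<Prod>j\<in>{..<r} - {k}. E j v ^ p)"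
      by (intro mpoly_fun_prod E_mp) auto
    then show ?thesis using that by (simp add: card_Diff_singleton mult.commute)
  qed
  have P2_mp: "mpoly_fun n (2 * p * (r - 1)) P2"
    unfolding P2_def by (intro mpoly_fun_sum mpoly_fun_cmult prod_mp) auto
  have P1_mp: "mpoly_fun n (2 * p * r - 1) P1"
  proof -
    have "mpoly_fun n (1 + 2 * p * (r - 1)) P1"
      unfolding P1_def
    proof (intro mpoly_fun_sum)
      fix k assume "k \<in> {..<r}"
      then have "mpoly_fun n (1 + 2 * p * (r - 1)) (\<lambda>v. C k * (G k v * (\<Prod>j\<in>{..<r} - {k}. E j v ^ p)))"
        by (intro mpoly_fun_cmult mpoly_fun_mult G_mp prod_mp) auto
      then show "mpoly_fun n (1 + 2 * p * (r - 1)) (\<lambda>v. C k * G k v * (\<Prod>j\<in>{..<r} - {k}. E j v ^ p))"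
        by (simp add: mult.assoc)
    qed simp
    moreover have "1 + 2 * p * (r - 1) \<le> 2 * p * r - 1"
      using assms r0 by (cases r) (auto simp: algebra_simps)
    ultimately show ?thesis by (rule mpoly_fun_mono)
  qed
  have P2_pos: "P2 v > 0" for v
    unfolding P2_def using r0 assms(5) E_pos
    by (intro sum_pos mult_pos_pos prod_pos zero_less_power) auto

  have main: "weno_rec r eps p C x0 dx f i = P1 (vf f) / P2 (vf f)" for f
  proof -
    define w where "w = vf f"
    define \<alpha> where "\<alpha> k = C k / E k w ^ p" for k
    define PI where "PI = (\<Prod>j<r. E j w ^ p)"
    have Pi_pos: "PI > 0" unfolding PI_def using E_pos by (intro prod_pos) auto
    have alpha: "\<alpha> k = C k * (\<Prod>j\<in>{..<r} - {k}. E j w ^ p) / PI" if "k < r" for k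
    proof -
      define R where "R = (\<Prod>j\<in>{..<r} - {k}. E j w ^ p)"
      have "PI = E k w ^ p * R"
        unfolding PI_def R_def using that by (subst prod.remove[of _ k]) auto
      moreover have "R > 0" unfolding R_def using E_pos by (intro prod_pos) auto
      moreover have "E k w ^ p > 0" using E_pos[of k w] by simp
      ultimately have "\<alpha> k = C k * R / PI" unfolding \<alpha>_def by (simp add: field_simps)
      then show ?thesis unfolding R_def .
    qed
    have S: "(\<Sum>j<r. \<alpha> j) = P2 w / PI"
      unfolding P2_def sum_divide_distrib by (intro sum.cong refl) (simp add: alpha)
    have T: "(\<Sum>k<r. \<alpha> k * G k w) = P1 w / PI"
      unfolding P1_def sum_divide_distrib by (intro sum.cong refl) (simp add: alpha)
    have "weno_rec r eps p C x0 dx f i = (\<Sum>k<r. \<alpha> k / (\<Sum>j<r. \<alpha> j) * G k w)"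
      unfolding weno_rec_def weno_omega_def weno_alpha_def \<alpha>_def w_def g_eq IS_eq E_def ..
    also have "\<dots> = (\<Sum>k<r. \<alpha> k * G k w) / (\<Sum>j<r. \<alpha> j)"
      by (simp add: sum_divide_distrib)
    also have "\<dots> = P1 w / P2 w" unfolding S T using Pi_pos by simp
    finally show ?thesis unfolding w_def .
  qed
  show ?thesis
    apply (rule exI[of _ P1], rule exI[of _ P2])
    using P1_mp P2_mp P2_pos main unfolding n_def vf_def by blast
qed

end
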